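(* Let $m,n\ge 2$ and $L\ge 2$ be integers, and let $p_1,\dots,p_L$ and $q_1,\dots,q_L$ be positive integers with $n=\prod_{\ell=1}^Lp_\ell$ and $m=\prod_{\ell=1}^Lq_\ell$. For positive integers $r_1,\dots,r_{L-1}$ (with $r_0=r_L:=1$) consider the architecture $\beta=(\pi_\ell)_{\ell=1}^L$ with $\pi_\ell=(a_\ell,b_\ell,c_\ell,d_\ell)$, $a_\ell=\prod_{j=1}^{\ell-1}p_j$, $d_\ell=\prod_{j=\ell+1}^Lq_j$, $b_\ell=q_\ell r_{\ell-1}$, $c_\ell=p_\ell r_\ell$. (1) If $p_\ell\ge 2$ and $q_\ell\ge 2$ for every $1\le\ell\le L$, then there exists a choice of integers $r_1,\dots,r_{L-1}$ for which $\beta$ is non-redundant. (2) If $q_1=1$, or $p_L=1$, or $p_\ell q_\ell=1$ for some $2\le\ell\le L-1$, then no choice of $r_1,\dots,r_{L-1}$ makes $\beta$ non-redundant.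
   Context: Patterns are tuples $(a,b,c,d)$ of positive integers. Patterns $\pi=(a,b,c,d),\pi'=(a',b',c',d')$ are chainable if $ac/a'=b'd'/d=:r(\pi,\pi')$ is an integer, $a\mid a'$, $d'\mid d$; a chainable pair is redundant if $r(\pi,\pi')\ge\min(b,c')$. A chainable architecture (sequence of patterns whose consecutive pairs are chainable) is redundant if some consecutive pair is redundant, and non-redundant otherwise. (The architectures defined in the claim are always chainable.) *)

theory Defs
  imports Main "HOL.Rat"
begin

type_synonym pattern = "nat \<times> nat \<times> nat \<times> nat"

definition pr :: "pattern \<Rightarrow> pattern \<Rightarrow> rat" where
  "pr \<pi> \<pi>' = (case \<pi> of (a,b,c,d) \<Rightarrow> case \<pi>' of (a',b',c',d') \<Rightarrow>
      of_nat (a*c) / of_nat a')"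

definition chainable :: "pattern \<Rightarrow> pattern \<Rightarrow> bool" where
  "chainable \<pi> \<pi>' = (case \<pi> of (a,b,c,d) \<Rightarrow> case \<pi>' of (a',b',c',d') \<Rightarrow>
      of_nat (a*c) / of_nat a' = (of_nat (b'*d') / of_nat d :: rat)
      \<and> (of_nat (a*c) / of_nat a' :: rat) \<in> \<int>
      \<and> a dvd a' \<and> d' dvd d)"

definition redundant_pair :: "pattern \<Rightarrow> pattern \<Rightarrow> bool" where
  "redundant_pair \<pi> \<pi>' = (chainable \<pi> \<pi>' \<and>
      (case \<pi> of (a,b,c,d) \<Rightarrow> case \<pi>' of (a',b',c',d') \<Rightarrow>
        pr \<pi> \<pi>' \<ge> of_nat (min b c')))"

definition chainable_arch :: "pattern list \<Rightarrow> bool" where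
  "chainable_arch xs = (\<forall>i. i + 1 < length xs \<longrightarrow> chainable (xs!i) (xs!(i+1)))"

definition non_redundant :: "pattern list \<Rightarrow> bool" where
  "non_redundant xs = (chainable_arch xs \<and>
     (\<forall>i. i + 1 < length xs \<longrightarrow> \<not> redundant_pair (xs!i) (xs!(i+1))))"

definition rr :: "nat \<Rightarrow> (nat \<Rightarrow> nat) \<Rightarrow> nat \<Rightarrow> nat" where
  "rr L r l = (if l = 0 \<or> l = L then 1 else r l)"

definition pat :: "(nat \<Rightarrow> nat) \<Rightarrow> (nat \<Rightarrow> nat) \<Rightarrow> (nat \<Rightarrow> nat) \<Rightarrow> nat \<Rightarrow> nat \<Rightarrow> pattern" where
  "pat p q r L l = ((\<Prod>j\<in>{1..<l}. p j), q l * rr L r (l - 1), p l * rr L r l,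
                    (\<Prod>j\<in>{l+1..L}. q j))"

definition arch :: "(nat \<Rightarrow> nat) \<Rightarrow> (nat \<Rightarrow> nat) \<Rightarrow> (nat \<Rightarrow> nat) \<Rightarrow> nat \<Rightarrow> pattern list" where
  "arch p q r L = map (pat p q r L) [1..<L+1]"

end

theory Submission
  imports Defs
begin

lemma pat_eqs:
  assumes "1 \<le> l" "l + 1 \<le> L"
  shows "pat p q r L l = (prod p {1..<l}, q l * rr L r (l-1), p l * rr L r l, q (l+1) * prod q {l+2..L})"
    and "pat p q r L (l+1) = (prod p {1..<l} * p l, q (l+1) * rr L r l, p (l+1) * rr L r (l+1), prod q {l+2..L})"
proof -
  have "prod q {l+1..L} = q (l+1) * prod q {Suc (l+1)..L}"
    using assms by (intro prod.atLeast_Suc_atMost) simp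
  then show "pat p q r L l = (prod p {1..<l}, q l * rr L r (l-1), p l * rr L r l, q (l+1) * prod q {l+2..L})"
    by (simp add: pat_def)
  have "prod p {1..<Suc l} = prod p {1..<l} * p l" using assms by (simp add: prod.op_ivl_Suc)
  then show "pat p q r L (l+1) = (prod p {1..<l} * p l, q (l+1) * rr L r l, p (l+1) * rr L r (l+1), prod q {l+2..L})"
    by (simp add: pat_def)
qed

lemma key:
  assumes pos: "\<forall>l\<in>{1..L}. p l > 0 \<and> q l > 0" and l: "1 \<le> l" "l + 1 \<le> L"
  shows "chainable (pat p q r L l) (pat p q r L (l+1))"
    and "pr (pat p q r L l) (pat p q r L (l+1)) = of_nat (rr L r l)"
    and "redundant_pair (pat p q r L l) (pat p q r L (l+1)) \<longleftrightarrow>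
           rr L r l \<ge> min (q l * rr L r (l-1)) (p (l+1) * rr L r (l+1))"
proof -
  define A where "A = prod p {1..<l}"
  define D where "D = prod q {l+2..L}"
  have A: "A > 0" unfolding A_def using pos l by (intro prod_pos) auto
  have D: "D > 0" unfolding D_def using pos l by (intro prod_pos) auto
  have pl: "p l > 0" and ql: "q (l+1) > 0" using pos l by auto
  note e = pat_eqs[OF l, of p q r, folded A_def D_def]
  have r1: "(of_nat (A * (p l * rr L r l)) / of_nat (A * p l) :: rat) = of_nat (rr L r l)"
    using A pl by (simp add: field_simps)
  have r2: "(of_nat (q (l+1) * rr L r l * D) / of_nat (q (l+1) * D) :: rat) = of_nat (rr L r l)"
    using D ql by (simp add: field_simps)
  show c: "chainable (pat p q r L l) (pat p q r L (l+1))"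
    unfolding e chainable_def prod.case r1 r2 by simp
  show pr: "pr (pat p q r L l) (pat p q r L (l+1)) = of_nat (rr L r l)"
    unfolding e pr_def prod.case r1 by simp
  show "redundant_pair (pat p q r L l) (pat p q r L (l+1)) \<longleftrightarrow>
           rr L r l \<ge> min (q l * rr L r (l-1)) (p (l+1) * rr L r (l+1))"
    unfolding redundant_pair_def using c pr unfolding e by (simp del: of_nat_min)
qed

lemma nr_iff:
  assumes pos: "\<forall>l\<in>{1..L}. p l > 0 \<and> q l > 0"
  shows "non_redundant (arch p q r L) \<longleftrightarrow>
     (\<forall>l. 1 \<le> l \<and> l + 1 \<le> L \<longrightarrow> rr L r l < min (q l * rr L r (l-1)) (p (l+1) * rr L r (l+1)))"
proof -
  have ix: "arch p q r L ! i = pat p q r L (i+1)" if "i < L" for i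
    using that by (simp add: arch_def nth_map nth_upt del: upt_Suc)
  have len: "length (arch p q r L) = L" by (simp add: arch_def)
  have "non_redundant (arch p q r L) \<longleftrightarrow>
     (\<forall>i. i + 1 < L \<longrightarrow> \<not> redundant_pair (pat p q r L (i+1)) (pat p q r L (i+1+1)))"
    unfolding non_redundant_def chainable_arch_def len
    using key(1)[OF pos, of "Suc _"] ix by auto
  also have "\<dots> \<longleftrightarrow> (\<forall>i. i + 1 < L \<longrightarrow> rr L r (i+1) < min (q (i+1) * rr L r i) (p (i+2) * rr L r (i+2)))"
    using key(3)[OF pos, of "Suc _"] by (auto simp: not_le)
  also have "\<dots> \<longleftrightarrow> (\<forall>l. 1 \<le> l \<and> l + 1 \<le> L \<longrightarrow> rr L r l < min (q l * rr L r (l-1)) (p (l+1) * rr L r (l+1)))"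
    apply safe
    subgoal for l by (drule spec[of _ "l-1"]) (simp add: Suc_diff_le numeral_2_eq_2)
    subgoal for i by (drule spec[of _ "Suc i"]) (simp add: numeral_2_eq_2)
    done
  finally show ?thesis .
qed

lemma rr1: "rr L (\<lambda>_. 1) l = 1" by (simp add: rr_def)

theorem corollary4p17:
  fixes m n L :: nat and p q :: "nat \<Rightarrow> nat"
  assumes "m \<ge> 2" and "n \<ge> 2" and "L \<ge> 2"
    and "\<forall>l\<in>{1..L}. p l > 0 \<and> q l > 0"
    and "n = (\<Prod>l\<in>{1..L}. p l)" and "m = (\<Prod>l\<in>{1..L}. q l)"
  shows "((\<forall>l\<in>{1..L}. p l \<ge> 2 \<and> q l \<ge> 2) \<longrightarrow>
            (\<exists>r. (\<forall>l\<in>{1..L-1}. r l > 0) \<and> non_redundant (arch p q r L)))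
       \<and> ((q 1 = 1 \<or> p L = 1 \<or> (\<exists>l\<in>{2..L-1}. p l * q l = 1)) \<longrightarrow>
            \<not> (\<exists>r. (\<forall>l\<in>{1..L-1}. r l > 0) \<and> non_redundant (arch p q r L)))"
proof (intro conjI impI)
  note nr = nr_iff[OF assms(4)]
  assume h: "\<forall>l\<in>{1..L}. p l \<ge> 2 \<and> q l \<ge> 2"
  have "non_redundant (arch p q (\<lambda>_. 1) L)"
    unfolding nr
  proof (intro allI impI)
    fix l assume l: "1 \<le> l \<and> l + 1 \<le> L"
    have "q l \<ge> 2" "p (l+1) \<ge> 2" using h l by auto
    then show "rr L (\<lambda>_. 1) l < min (q l * rr L (\<lambda>_. 1) (l-1)) (p (l+1) * rr L (\<lambda>_. 1) (l+1))"
      by (simp add: rr1 rr1[simplified])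
  qed
  then show "\<exists>r. (\<forall>l\<in>{1..L-1}. r l > 0) \<and> non_redundant (arch p q r L)" by auto
next
  note nr = nr_iff[OF assms(4)]
  assume h: "q 1 = 1 \<or> p L = 1 \<or> (\<exists>l\<in>{2..L-1}. p l * q l = 1)"
  show "\<not> (\<exists>r. (\<forall>l\<in>{1..L-1}. r l > 0) \<and> non_redundant (arch p q r L))"
  proof
    assume "\<exists>r. (\<forall>l\<in>{1..L-1}. r l > 0) \<and> non_redundant (arch p q r L)"
    then obtain r where rp: "\<forall>l\<in>{1..L-1}. r l > 0" and
      C: "\<And>l. 1 \<le> l \<Longrightarrow> l + 1 \<le> L \<Longrightarrow> rr L r l < min (q l * rr L r (l-1)) (p (l+1) * rr L r (l+1))"
      unfolding nr by blast
    have rrp: "rr L r l > 0" if "l \<le> L" for l using rp that by (auto simp: rr_def)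
    consider "q 1 = 1" | "p L = 1" | l where "l \<in> {2..L-1}" "p l * q l = 1" using h by blast
    then show False
    proof cases
      case 1
      have "rr L r 1 < q 1 * rr L r 0" using C[of 1] assms(3) by simp
      with 1 show False using rrp[of 1] assms(3) by (simp add: rr_def)
    next
      case 2
      have "rr L r (L-1) < p (L-1+1) * rr L r (L-1+1)" using C[of "L-1"] assms(3) by simp
      with 2 assms(3) show False using rrp[of "L-1"] by (simp add: rr_def)
    next
      case 3
      then have pq: "p l = 1" "q l = 1" by auto
      have a: "rr L r (l-1) < p (l-1+1) * rr L r (l-1+1)" using C[of "l-1"] 3 by auto
      have b: "rr L r l < q l * rr L r (l-1)" using C[of l] 3 by auto
      from a b pq 3 show False by simp
    qed
  qed
qed

end
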